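(* Let $\mathbf{F}=(F_1,\ldots,F_d)$ be a vector of finite simple graphs, all with exactly $n$ vertices, and let $n'' \geq n' \geq n$ be integers. Then for every positive integer $k$, \[E_{P^L_{\mathbf{F};n''}}\left({ n' \choose n} k \right) \le E_{P^L_{\mathbf{F};n'}}\left({ n'' \choose n } k \right).\]
   Context: For graphs $F,G$, $t^L(F,G)$ is the number of subgraphs of $G$ (not necessarily induced) isomorphic to $F$; write $t^L(\mathbf{F},G)=(t^L(F_1,G),\ldots,t^L(F_d,G))$. The lattice polytope of subgraph statistics is $P^L_{\mathbf{F};N}=\mathrm{conv}\{t^L(\mathbf{F},G)\mid G\text{ a graph on } N \text{ vertices}\}\subseteq\mathbb{R}^d$. For a lattice polytope $P\subseteq\mathbb{R}^d$ and a positive integer $k$, $E_P(k)$ is the number of points of $\mathbb{Z}^d$ in $kP=\{kp\mid p\in P\}$ (the Ehrhart polynomial of $P$). *)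

theory Defs
  imports "HOL-Analysis.Analysis"
begin

definition simple_graph_on :: "nat \<Rightarrow> nat set set \<Rightarrow> bool" where
  "simple_graph_on N E \<longleftrightarrow> (\<forall>e\<in>E. e \<subseteq> {0..<N} \<and> card e = 2)"

text \<open>Number of (not necessarily induced) subgraphs (V', E') of the graph G on N
  vertices that are isomorphic to the graph F on n vertices.\<close>

definition tL :: "nat \<Rightarrow> nat set set \<Rightarrow> nat \<Rightarrow> nat set set \<Rightarrow> nat" where
  "tL n F N G = card {(V', E'). V' \<subseteq> {0..<N} \<and> E' \<subseteq> G \<and>
      (\<exists>f. bij_betw f {0..<n} V' \<and> E' = (\<lambda>e. f ` e) ` F)}"

definition tL_vec :: "nat \<Rightarrow> ('d::finite \<Rightarrow> nat set set) \<Rightarrow> nat \<Rightarrow> nat set set \<Rightarrow> real^'d" where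
  "tL_vec n Fs N G = (\<chi> i. real (tL n (Fs i) N G))"

definition PL :: "nat \<Rightarrow> ('d::finite \<Rightarrow> nat set set) \<Rightarrow> nat \<Rightarrow> (real^'d) set" where
  "PL n Fs N = convex hull {tL_vec n Fs N G | G. simple_graph_on N G}"

definition ehrhart :: "(real^'d::finite) set \<Rightarrow> nat \<Rightarrow> nat" where
  "ehrhart P k = card {z. (\<forall>i. z $ i \<in> \<int>) \<and> z \<in> (\<lambda>p. real k *\<^sub>R p) ` P}"

end

theory Submission
  imports Defs
begin

definition copies :: "nat \<Rightarrow> nat set set \<Rightarrow> nat \<Rightarrow> nat set set \<Rightarrow> (nat set \<times> nat set set) set" where
  "copies n F N G = {(V', E'). V' \<subseteq> {0..<N} \<and> E' \<subseteq> G \<and>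
      (\<exists>f. bij_betw f {0..<n} V' \<and> E' = (\<lambda>e. f ` e) ` F)}"

lemma tL_copies: "tL n F N G = card (copies n F N G)"
  unfolding tL_def copies_def by simp

lemma finite_copies:
  assumes "simple_graph_on n F"
  shows "finite (copies n F N G)"
proof (rule finite_subset)
  show "copies n F N G \<subseteq> Pow {0..<N} \<times> Pow (Pow {0..<N})"
  proof clarsimp
    fix V E f assume c: "(V, E) \<in> copies n F N G" and "(V,E) \<in> copies n F N G"
    from c obtain f where V: "V \<subseteq> {0..<N}" and b: "bij_betw f {0..<n} V" and E: "E = (\<lambda>e. f ` e) ` F"
      unfolding copies_def by auto
    have "\<forall>e\<in>E. e \<subseteq> {0..<N}"
    proof
      fix e assume "e \<in> E"
      then obtain e0 where "e0 \<in> F" "e = f ` e0" using E by auto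
      then have "e0 \<subseteq> {0..<n}" using assms unfolding simple_graph_on_def by auto
      then have "e \<subseteq> V" using b \<open>e = f ` e0\<close> unfolding bij_betw_def by auto
      then show "e \<subseteq> {0..<N}" using V by auto
    qed
    then show "V \<subseteq> {0..<N} \<and> E \<subseteq> Pow {0..<N}" using V by auto
  qed
qed auto

lemma copies_card:
  assumes "p \<in> copies n F N G" shows "card (fst p) = n" "fst p \<subseteq> {0..<N}"
  using assms unfolding copies_def by (auto dest: bij_betw_same_card)

lemma card_supersets:
  assumes V: "V \<subseteq> {0..<N}" "card V = n" and "n \<le> m"
  shows "card {S. S \<subseteq> {0..<N} \<and> card S = m \<and> V \<subseteq> S} = (N - n) choose (m - n)"
proof -
  have fV: "finite V" using V finite_subset by blast
  have "bij_betw (\<lambda>S. S - V) {S. S \<subseteq> {0..<N} \<and> card S = m \<and> V \<subseteq> S}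
          {B. B \<subseteq> {0..<N} - V \<and> card B = m - n}"
  proof (rule bij_betw_byWitness[where f'="\<lambda>B. B \<union> V"])
    show "\<forall>a\<in>{S. S \<subseteq> {0..<N} \<and> card S = m \<and> V \<subseteq> S}. a - V \<union> V = a" by auto
    show "\<forall>a'\<in>{B. B \<subseteq> {0..<N} - V \<and> card B = m - n}. a' \<union> V - V = a'" by auto
    show "(\<lambda>S. S - V) ` {S. S \<subseteq> {0..<N} \<and> card S = m \<and> V \<subseteq> S}
          \<subseteq> {B. B \<subseteq> {0..<N} - V \<and> card B = m - n}"
    proof (rule image_subsetI)
      fix S assume S: "S \<in> {S. S \<subseteq> {0..<N} \<and> card S = m \<and> V \<subseteq> S}"
      then have "finite S" using finite_subset by blast
      then show "S - V \<in> {B. B \<subseteq> {0..<N} - V \<and> card B = m - n}"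
        using V S by (auto simp: card_Diff_subset fV)
    qed
    show "(\<lambda>B. B \<union> V) ` {B. B \<subseteq> {0..<N} - V \<and> card B = m - n}
          \<subseteq> {S. S \<subseteq> {0..<N} \<and> card S = m \<and> V \<subseteq> S}"
    proof (rule image_subsetI)
      fix B assume "B \<in> {B. B \<subseteq> {0..<N} - V \<and> card B = m - n}"
      then have B: "B \<subseteq> {0..<N} - V" "card B = m - n" by auto
      then have "finite B" using finite_subset by blast
      then have "card (B \<union> V) = card B + card V"
        using B by (subst card_Un_disjoint) (auto simp: fV)
      then show "B \<union> V \<in> {S. S \<subseteq> {0..<N} \<and> card S = m \<and> V \<subseteq> S}"
        using B V \<open>n \<le> m\<close> by auto
    qed
  qed
  then have "card {S. S \<subseteq> {0..<N} \<and> card S = m \<and> V \<subseteq> S} = card {B. B \<subseteq> {0..<N} - V \<and> card B = m - n}"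
    by (rule bij_betw_same_card)
  also have "\<dots> = card ({0..<N} - V) choose (m - n)" by (rule n_subsets) auto
  also have "card ({0..<N} - V) = N - n" using V by (simp add: card_Diff_subset fV)
  finally show ?thesis .
qed

lemma double_count:
  assumes fin: "finite C" and cC: "\<And>p. p \<in> C \<Longrightarrow> card (fst p) = n \<and> fst p \<subseteq> {0..<N}"
    and "n \<le> m"
  shows "(\<Sum>S\<in>{S. S \<subseteq> {0..<N} \<and> card S = m}. card {p\<in>C. fst p \<subseteq> S})
          = card C * ((N - n) choose (m - n))"
proof -
  let ?Ss = "{S. S \<subseteq> {0..<N} \<and> card S = m}"
  have fSs: "finite ?Ss" by (rule finite_subset[of _ "Pow {0..<N}"]) auto
  have "(\<Sum>S\<in>?Ss. card {p\<in>C. fst p \<subseteq> S}) = (\<Sum>S\<in>?Ss. \<Sum>p\<in>C. if fst p \<subseteq> S then 1 else 0)"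
    using fin by (auto simp: sum.If_cases intro!: sum.cong arg_cong[where f=card])
  also have "\<dots> = (\<Sum>p\<in>C. \<Sum>S\<in>?Ss. if fst p \<subseteq> S then 1 else 0)" by (rule sum.swap)
  also have "\<dots> = (\<Sum>p\<in>C. card {S. S \<subseteq> {0..<N} \<and> card S = m \<and> fst p \<subseteq> S})"
  proof (rule sum.cong)
    fix p assume "p \<in> C"
    have "{S\<in>?Ss. fst p \<subseteq> S} = {S. S \<subseteq> {0..<N} \<and> card S = m \<and> fst p \<subseteq> S}" by auto
    then show "(\<Sum>S\<in>?Ss. if fst p \<subseteq> S then 1 else 0) = card {S. S \<subseteq> {0..<N} \<and> card S = m \<and> fst p \<subseteq> S}"
      using fSs by (simp add: sum.If_cases Int_def conj_ac)
  qed simp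
  also have "\<dots> = (\<Sum>p\<in>C. (N - n) choose (m - n))"
    using cC \<open>n \<le> m\<close> by (intro sum.cong refl card_supersets) auto
  finally show ?thesis by simp
qed

lemma copies_edges:
  assumes "simple_graph_on n F" "(V, E) \<in> copies n F N G" "e \<in> E"
  shows "e \<subseteq> V"
proof -
  from assms(2) obtain f where b: "bij_betw f {0..<n} V" and E: "E = (\<lambda>e. f ` e) ` F"
    unfolding copies_def by auto
  obtain e0 where "e0 \<in> F" "e = f ` e0" using E assms(3) by auto
  then have "e0 \<subseteq> {0..<n}" using assms(1) unfolding simple_graph_on_def by auto
  then show "e \<subseteq> V" using b \<open>e = f ` e0\<close> unfolding bij_betw_def by auto
qed

lemma relabel_simple:
  assumes G: "simple_graph_on N G" and h: "bij_betw h {0..<m} S"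
  shows "simple_graph_on m {e. e \<subseteq> {0..<m} \<and> h ` e \<in> G}"
  unfolding simple_graph_on_def
proof safe
  fix e assume e: "e \<subseteq> {0..<m}" "h ` e \<in> G"
  have "inj_on h e" using h e(1) unfolding bij_betw_def by (auto intro: inj_on_subset)
  then have "card e = card (h ` e)" by (simp add: card_image)
  then show "card e = 2" using G e(2) unfolding simple_graph_on_def by auto
qed

lemma img_fix: "(\<And>x. x \<in> A \<Longrightarrow> f x = x) \<Longrightarrow> f ` A = A"
  by (metis image_cong image_ident)

lemma relabel_count:
  assumes F: "simple_graph_on n F" and h: "bij_betw h {0..<m} S" and S: "S \<subseteq> {0..<N}"
  shows "card (copies n F m {e. e \<subseteq> {0..<m} \<and> h ` e \<in> G}) = card {p \<in> copies n F N G. fst p \<subseteq> S}"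
proof -
  define H where "H = {e. e \<subseteq> {0..<m} \<and> h ` e \<in> G}"
  define g where "g = inv_into {0..<m} h"
  have hinj: "inj_on h {0..<m}" and himg: "h ` {0..<m} = S" using h by (auto simp: bij_betw_def)
  have gh: "g (h x) = x" if "x \<in> {0..<m}" for x using hinj that unfolding g_def by simp
  have hg: "h (g y) = y" if "y \<in> S" for y using himg that unfolding g_def by (auto intro: f_inv_into_f)
  have gS: "g y \<in> {0..<m}" if "y \<in> S" for y using inv_into_into[of y h "{0..<m}"] himg that unfolding g_def by auto
  have gbij: "bij_betw g S {0..<m}" unfolding g_def using h by (rule bij_betw_inv_into)
  have "bij_betw (\<lambda>(W, E). (h ` W, (\<lambda>e. h ` e) ` E)) (copies n F m H) {p \<in> copies n F N G. fst p \<subseteq> S}"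
  proof (rule bij_betw_byWitness[where f'="\<lambda>(V, E). (g ` V, (\<lambda>e. g ` e) ` E)"])
    show "\<forall>a\<in>copies n F m H. (\<lambda>(V, E). (g ` V, (\<lambda>e. g ` e) ` E)) ((\<lambda>(W, E). (h ` W, (\<lambda>e. h ` e) ` E)) a) = a"
    proof (rule ballI)
      fix a assume a: "a \<in> copies n F m H"
      obtain W E where aWE: "a = (W, E)" by (cases a)
      have c: "(W, E) \<in> copies n F m H" using a aWE by simp
      have W: "W \<subseteq> {0..<m}" using c unfolding copies_def by auto
      have eE: "e \<subseteq> {0..<m}" if "e \<in> E" for e using copies_edges[OF F c that] W by auto
      have 1: "g ` h ` W = W" unfolding image_image using W gh by (intro img_fix) auto
      have "(\<lambda>e. g ` e) ` (\<lambda>e. h ` e) ` E = E"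
        unfolding image_image
      proof (rule img_fix)
        fix e assume e: "e \<in> E" show "(\<lambda>x. g (h x)) ` e = e"
        proof (rule img_fix)
          fix x assume "x \<in> e" with eE e have "x \<in> {0..<m}" by blast
          then show "g (h x) = x" using gh by blast
        qed
      qed
      then show "(\<lambda>(V, E). (g ` V, (\<lambda>e. g ` e) ` E)) ((\<lambda>(W, E). (h ` W, (\<lambda>e. h ` e) ` E)) a) = a"
        using 1 aWE by simp
    qed
    show "\<forall>a\<in>{p \<in> copies n F N G. fst p \<subseteq> S}. (\<lambda>(W, E). (h ` W, (\<lambda>e. h ` e) ` E)) ((\<lambda>(V, E). (g ` V, (\<lambda>e. g ` e) ` E)) a) = a"
    proof (rule ballI)
      fix a assume a: "a \<in> {p \<in> copies n F N G. fst p \<subseteq> S}"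
      obtain V E where aWE: "a = (V, E)" by (cases a)
      have c: "(V, E) \<in> copies n F N G" and V: "fst (V, E) \<subseteq> S" using a aWE by auto
      have eE: "e \<subseteq> S" if "e \<in> E" for e using copies_edges[OF F c that] V by auto
      have 1: "h ` g ` V = V" unfolding image_image using V hg by (intro img_fix) auto
      have "(\<lambda>e. h ` e) ` (\<lambda>e. g ` e) ` E = E"
        unfolding image_image
      proof (rule img_fix)
        fix e assume e: "e \<in> E" show "(\<lambda>x. h (g x)) ` e = e"
        proof (rule img_fix)
          fix x assume "x \<in> e" with eE e have "x \<in> S" by blast
          then show "h (g x) = x" using hg by blast
        qed
      qed
      then show "(\<lambda>(W, E). (h ` W, (\<lambda>e. h ` e) ` E)) ((\<lambda>(V, E). (g ` V, (\<lambda>e. g ` e) ` E)) a) = a"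
        using 1 aWE by simp
    qed
    show "(\<lambda>(W, E). (h ` W, (\<lambda>e. h ` e) ` E)) ` copies n F m H \<subseteq> {p \<in> copies n F N G. fst p \<subseteq> S}"
    proof (rule image_subsetI)
      fix a assume a: "a \<in> copies n F m H"
      obtain W E where aWE: "a = (W, E)" by (cases a)
      have c: "(W, E) \<in> copies n F m H" using a aWE by simp
      then obtain f where W: "W \<subseteq> {0..<m}" and EH: "E \<subseteq> H" and b: "bij_betw f {0..<n} W"
        and E: "E = (\<lambda>e. f ` e) ` F" unfolding copies_def by auto
      have hW: "h ` W \<subseteq> S" using W himg by auto
      have b2: "bij_betw (h \<circ> f) {0..<n} (h ` W)"
        using b bij_betw_subset[OF h W refl] by (rule bij_betw_trans)
      have E2: "(\<lambda>e. h ` e) ` E = (\<lambda>e. (h \<circ> f) ` e) ` F" unfolding E image_image image_comp by simp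
      have "(\<lambda>e. h ` e) ` E \<subseteq> G" using EH unfolding H_def by auto
      then show "(\<lambda>(W, E). (h ` W, (\<lambda>e. h ` e) ` E)) a \<in> {p \<in> copies n F N G. fst p \<subseteq> S}"
        using aWE hW S b2 E2 unfolding copies_def by auto
    qed
    show "(\<lambda>(V, E). (g ` V, (\<lambda>e. g ` e) ` E)) ` {p \<in> copies n F N G. fst p \<subseteq> S} \<subseteq> copies n F m H"
    proof (rule image_subsetI)
      fix a assume a: "a \<in> {p \<in> copies n F N G. fst p \<subseteq> S}"
      obtain V E where aWE: "a = (V, E)" by (cases a)
      have c: "(V, E) \<in> copies n F N G" and V: "fst (V, E) \<subseteq> S" using a aWE by auto
      then obtain f where b: "bij_betw f {0..<n} V"
        and E: "E = (\<lambda>e. f ` e) ` F" unfolding copies_def by auto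
      have VS: "V \<subseteq> S" using V by simp
      have EG: "E \<subseteq> G" using c unfolding copies_def by auto
      have eE: "e \<subseteq> S" if "e \<in> E" for e using copies_edges[OF F c that] VS by auto
      have gV: "g ` V \<subseteq> {0..<m}" using VS gS by auto
      have b2: "bij_betw (g \<circ> f) {0..<n} (g ` V)"
        using b bij_betw_subset[OF gbij VS refl] by (rule bij_betw_trans)
      have E2: "(\<lambda>e. g ` e) ` E = (\<lambda>e. (g \<circ> f) ` e) ` F" unfolding E image_image image_comp by simp
      have "(\<lambda>e. g ` e) ` E \<subseteq> H"
      proof
        fix x assume "x \<in> (\<lambda>e. g ` e) ` E"
        then obtain e where e: "e \<in> E" "x = g ` e" by auto
        have "h ` g ` e = e" unfolding image_image using eE[OF e(1)] hg by (intro img_fix) auto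
        then show "x \<in> H" unfolding H_def using e eE[OF e(1)] gS EG by auto
      qed
      then show "(\<lambda>(V, E). (g ` V, (\<lambda>e. g ` e) ` E)) a \<in> copies n F m H"
        using aWE gV b2 E2 unfolding copies_def by auto
    qed
  qed
  then show ?thesis unfolding H_def by (rule bij_betw_same_card)
qed

lemma key_point:
  fixes Fs :: "'d::finite \<Rightarrow> nat set set"
  assumes Fs: "\<And>i. simple_graph_on n (Fs i)" and nn': "n \<le> n'" and n'n'': "n' \<le> n''"
    and G: "simple_graph_on n'' G"
  shows "(real (n' choose n) / real (n'' choose n)) *\<^sub>R tL_vec n Fs n'' G \<in> PL n Fs n'"
proof -
  define Ss where "Ss = {S. S \<subseteq> {0..<n''} \<and> card S = n'}"
  have fSs: "finite Ss" unfolding Ss_def by (rule finite_subset[of _ "Pow {0..<n''}"]) auto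
  have cSs: "card Ss = n'' choose n'" unfolding Ss_def using n_subsets[of "{0..<n''}" n'] by simp
  define c where "c = n'' choose n'"
  have cpos: "c > 0" unfolding c_def using n'n'' by simp
  define hS :: "nat set \<Rightarrow> nat \<Rightarrow> nat" where "hS S = (SOME h. bij_betw h {0..<n'} S)" for S
  have hS: "bij_betw (hS S) {0..<n'} S" if "S \<in> Ss" for S
  proof -
    have "finite S" using that unfolding Ss_def using finite_subset by blast
    then have "\<exists>h. bij_betw h {0..<n'} S" using ex_bij_betw_nat_finite[of S] that unfolding Ss_def by auto
    then show ?thesis unfolding hS_def by (rule someI_ex)
  qed
  define HS where "HS S = {e. e \<subseteq> {0..<n'} \<and> hS S ` e \<in> G}" for S
  define v where "v S = tL_vec n Fs n' (HS S)" for S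
  have vP: "v S \<in> PL n Fs n'" if "S \<in> Ss" for S
  proof -
    have "simple_graph_on n' (HS S)" unfolding HS_def using relabel_simple[OF G hS[OF that]] .
    then have "v S \<in> {tL_vec n Fs n' G | G. simple_graph_on n' G}" unfolding v_def by blast
    then show ?thesis unfolding PL_def by (rule hull_inc)
  qed
  have mult: "c * (n' choose n) = (n'' choose n) * ((n'' - n) choose (n' - n))"
    unfolding c_def by (rule choose_mult[OF nn' n'n''])
  have Bpos: "(n'' choose n) > 0" using nn' n'n'' by simp
  have eq: "(real (n' choose n) / real (n'' choose n)) *\<^sub>R tL_vec n Fs n'' G
      = (\<Sum>S\<in>Ss. (1 / real (card Ss)) *\<^sub>R v S)"
  unfolding vec_eq_iff
  proof (rule allI)
    fix i
    have cnt: "(\<Sum>S\<in>Ss. card {p \<in> copies n (Fs i) n'' G. fst p \<subseteq> S})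
          = card (copies n (Fs i) n'' G) * ((n'' - n) choose (n' - n))"
      unfolding Ss_def
      by (rule double_count[OF finite_copies[OF Fs]]) (use copies_card nn' in auto)
    have "(\<Sum>S\<in>Ss. (1 / real (card Ss)) *\<^sub>R v S) $ i = (\<Sum>S\<in>Ss. (1 / real c) * real (tL n (Fs i) n' (HS S)))"
      by (simp add: v_def tL_vec_def cSs c_def)
    also have "\<dots> = (1 / real c) * real (\<Sum>S\<in>Ss. card {p \<in> copies n (Fs i) n'' G. fst p \<subseteq> S})"
    proof -
      have "tL n (Fs i) n' (HS S) = card {p \<in> copies n (Fs i) n'' G. fst p \<subseteq> S}" if "S \<in> Ss" for S
        unfolding tL_copies HS_def
        by (rule relabel_count[OF Fs hS[OF that]]) (use that in \<open>auto simp: Ss_def\<close>)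
      then show ?thesis by (simp add: sum_distrib_left)
    qed
    also have "\<dots> = (1 / real c) * (real (card (copies n (Fs i) n'' G)) * real ((n'' - n) choose (n' - n)))"
      unfolding cnt by simp
    also have "\<dots> = (real (n' choose n) / real (n'' choose n)) * real (tL n (Fs i) n'' G)"
    proof -
      have "real c * real (n' choose n) = real (n'' choose n) * real ((n'' - n) choose (n' - n))"
        using mult by (metis of_nat_mult)
      then show ?thesis unfolding tL_copies using cpos Bpos
        by (simp add: field_simps)
    qed
    finally show "((real (n' choose n) / real (n'' choose n)) *\<^sub>R tL_vec n Fs n'' G) $ i
      = (\<Sum>S\<in>Ss. (1 / real (card Ss)) *\<^sub>R v S) $ i" by (simp add: tL_vec_def)
  qed
  have "(\<Sum>S\<in>Ss. (1 / real (card Ss)) *\<^sub>R v S) \<in> PL n Fs n'"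
  proof (rule convex_sum[OF fSs])
    show "convex (PL n Fs n')" unfolding PL_def by (rule convex_convex_hull)
    show "(\<Sum>S\<in>Ss. 1 / real (card Ss)) = 1" using cSs cpos c_def by simp
  qed (auto intro: vP)
  then show ?thesis using eq by simp
qed

lemma finite_int_points:
  fixes X :: "(real^'d::finite) set"
  assumes "bounded X"
  shows "finite {z. (\<forall>i. z $ i \<in> \<int>) \<and> z \<in> X}"
proof -
  obtain M where M: "\<And>x. x \<in> X \<Longrightarrow> norm x \<le> M" using assms bounded_iff by blast
  define K where "K = {x::real. x \<in> \<int> \<and> \<bar>x\<bar> \<le> M}"
  have fK: "finite K"
  proof (rule finite_subset)
    show "K \<subseteq> of_int ` {-\<lceil>M\<rceil>..\<lceil>M\<rceil>}"
    proof
      fix x assume "x \<in> K"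
      then obtain j where j: "x = of_int j" "\<bar>x\<bar> \<le> M" unfolding K_def by (auto elim: Ints_cases)
      then have "\<bar>j\<bar> \<le> \<lceil>M\<rceil>" by linarith
      then have "j \<in> {-\<lceil>M\<rceil>..\<lceil>M\<rceil>}" by auto
      then show "x \<in> of_int ` {-\<lceil>M\<rceil>..\<lceil>M\<rceil>}" using j(1) by (rule rev_image_eqI)
    qed
  qed auto
  let ?A = "{z. (\<forall>i. z $ i \<in> \<int>) \<and> z \<in> X}"
  have "finite ((\<lambda>z. \<lambda>i. z $ i) ` ?A)"
  proof (rule finite_subset)
    show "(\<lambda>z. \<lambda>i. z $ i) ` ?A \<subseteq> PiE (UNIV::'d set) (\<lambda>_. K)"
    proof clarify
      fix z assume z: "\<forall>i. z $ i \<in> \<int>" "z \<in> X"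
      have "\<bar>z $ i\<bar> \<le> M" for i using component_le_norm_cart[of z i] M[OF z(2)] by linarith
      then show "(\<lambda>i. z $ i) \<in> PiE (UNIV::'d set) (\<lambda>_. K)" using z(1) unfolding K_def by auto
    qed
    show "finite (PiE (UNIV::'d set) (\<lambda>_. K))" using fK by (intro finite_PiE) (simp_all add: finite_class.finite_UNIV)
  qed
  moreover have "inj_on (\<lambda>z. \<lambda>i. z $ i) ?A" by (rule inj_onI) (simp add: vec_eq_iff fun_eq_iff)
  ultimately show ?thesis by (rule finite_imageD)
qed

theorem proposition2p8:
  fixes Fs :: "'d::finite \<Rightarrow> nat set set" and n n' n'' k :: nat
  assumes "\<And>i. simple_graph_on n (Fs i)"
    and "n \<le> n'" and "n' \<le> n''" and "0 < k"
  shows "ehrhart (PL n Fs n'') ((n' choose n) * k) \<le> ehrhart (PL n Fs n') ((n'' choose n) * k)"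
proof -
  define A where "A = n' choose n"
  define B where "B = n'' choose n"
  have Bpos: "B > 0" unfolding B_def using assms by simp
  define r where "r = real A / real B"
  have sub: "(\<lambda>p. r *\<^sub>R p) ` PL n Fs n'' \<subseteq> PL n Fs n'"
  proof -
    have "(\<lambda>p. r *\<^sub>R p) ` PL n Fs n'' = convex hull ((\<lambda>p. r *\<^sub>R p) ` {tL_vec n Fs n'' G | G. simple_graph_on n'' G})"
      unfolding PL_def by (rule convex_hull_scaling[symmetric])
    also have "\<dots> \<subseteq> PL n Fs n'"
    proof (rule hull_minimal)
      show "(\<lambda>p. r *\<^sub>R p) ` {tL_vec n Fs n'' G | G. simple_graph_on n'' G} \<subseteq> PL n Fs n'"
      proof -
        have kp: "(real (n' choose n) / real (n'' choose n)) *\<^sub>R tL_vec n Fs n'' G \<in> PL n Fs n'"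
          if "simple_graph_on n'' G" for G
          using key_point[where Fs=Fs and n=n and n'=n' and n''=n'' and G=G] assms that by blast
        then show ?thesis unfolding r_def A_def B_def by blast
      qed
      show "convex (PL n Fs n')" unfolding PL_def by (rule convex_convex_hull)
    qed
    finally show ?thesis .
  qed
  have img: "(\<lambda>p. real (A * k) *\<^sub>R p) ` PL n Fs n'' \<subseteq> (\<lambda>p. real (B * k) *\<^sub>R p) ` PL n Fs n'"
  proof
    fix x assume "x \<in> (\<lambda>p. real (A * k) *\<^sub>R p) ` PL n Fs n''"
    then obtain p where p: "p \<in> PL n Fs n''" "x = real (A * k) *\<^sub>R p" by auto
    have q: "r *\<^sub>R p \<in> PL n Fs n'" using sub p(1) by auto
    have "x = real (B * k) *\<^sub>R (r *\<^sub>R p)" using p(2) Bpos unfolding r_def by (simp add: field_simps)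
    then show "x \<in> (\<lambda>p. real (B * k) *\<^sub>R p) ` PL n Fs n'" using q by blast
  qed
  have fin: "finite (tL_vec n Fs n' ` {G. simple_graph_on n' G})"
  proof -
    have "{G. simple_graph_on n' G} \<subseteq> Pow (Pow {0..<n'})" unfolding simple_graph_on_def by auto
    then show ?thesis by (meson finite_Pow_iff finite_atLeastLessThan finite_imageI finite_subset)
  qed
  have "{tL_vec n Fs n' G | G. simple_graph_on n' G} = tL_vec n Fs n' ` {G. simple_graph_on n' G}" by auto
  then have "compact (PL n Fs n')" unfolding PL_def using fin by (simp add: compact_convex_hull finite_imp_compact)
  then have "bounded ((\<lambda>p. real (B * k) *\<^sub>R p) ` PL n Fs n')"
    by (intro bounded_scaling compact_imp_bounded)
  then have "finite {z. (\<forall>i. z $ i \<in> \<int>) \<and> z \<in> (\<lambda>p. real (B * k) *\<^sub>R p) ` PL n Fs n'}"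
    by (rule finite_int_points)
  then show ?thesis unfolding ehrhart_def A_def[symmetric] B_def[symmetric]
    by (rule card_mono) (use img in blast)
qed

end
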